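(* Let $\phi=\langle X,Q,D,C\rangle$ be a QCSP with $C=\{c_1,\dots,c_m\}$, and for each $k\in\{1,\dots,m\}$ let $\phi_k=\langle X,Q,D,\{c_k\}\rangle$. Then for all $x_i\in X$, $V\subseteq X$ and $a,b\in D_{x_i}$: $\bigl(\bigvee_{k}\textsl{inconsistent}^{\phi_k}(x_i,a)\bigr)\rightarrow\textsl{inconsistent}^\phi(x_i,a)$; $\bigl(\bigvee_{k}\textsl{implied}^{\phi_k}(x_i,a)\bigr)\rightarrow\textsl{implied}^\phi(x_i,a)$; $\bigl(\bigwedge_{k}\textsl{d-fixable}^{\phi_k}(x_i,a)\bigr)\rightarrow\textsl{d-fixable}^\phi(x_i,a)$; $\bigl(\bigwedge_{k}\textsl{d-substitutable}^{\phi_k}(x_i,a,b)\bigr)\rightarrow\textsl{d-substitutable}^\phi(x_i,a,b)$; $\bigl(\bigwedge_{k}\textsl{d-interchangeable}^{\phi_k}(x_i,a,b)\bigr)\rightarrow\textsl{d-interchangeable}^\phi(x_i,a,b)$; $\bigl(\bigvee_{k}\textsl{determined}^{\phi_k}(x_i)\bigr)\rightarrow\textsl{determined}^\phi(x_i)$; $\bigl(\bigwedge_{k}\textsl{d-irrelevant}^{\phi_k}(x_i)\bigr)\rightarrow\textsl{d-irrelevant}^\phi(x_i)$; $\bigl(\bigvee_{k}\textsl{dependent}^{\phi_k}(V,x_i)\bigr)\rightarrow\textsl{dependent}^\phi(V,x_i)$.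
   Context: Fix a finite set $\mathbb{D}$. For a finite set $V$ of variables, a $V$-tuple is a map $t:V\to\mathbb{D}$, written $x\mapsto t_x$; a $V$-relation is a set of $V$-tuples. A QCSP is a tuple $\phi=\langle X,Q,D,C\rangle$ where $X=\{x_1,\dots,x_n\}$ is a finite set of variables linearly ordered by index, $Q$ assigns to each $x_i$ a quantifier $Q_{x_i}\in\{\forall,\exists\}$, $D$ assigns to each $x_i$ a domain $D_{x_i}\subseteq\mathbb{D}$, and $C$ is a finite set of constraints, each being a $V$-relation for some $V\subseteq X$. For $V\subseteq X$, $\prod_{x\in V}D_x$ denotes the set of $V$-tuples $t$ with $t_x\in D_x$ for all $x\in V$. For an $X$-tuple $t$, $x\in X$, $a\in\mathbb{D}$, $t[x:=a]$ is the tuple equal to $t$ except that its value at $x$ is $a$; $t|_U$ is the restriction to $U$. Let $E=\{x_i:Q_{x_i}=\exists\}$, $A=\{x_i:Q_{x_i}=\forall\}$, $A_j=\{x_i\in A:i\le j\}$. $\mathrm{sol}^\phi$ is the set of $t\in\prod_{x\in X}D_x$ with $t|_V\in c$ for every $V$-relation $c\in C$. A strategy is a family $s=(s_{x_i})_{x_i\in E}$ of functions $s_{x_i}:\prod_{y\in A_{i-1}}D_y\to D_{x_i}$; its scenarios $\mathrm{sce}^\phi(s)$ are the $t\in\prod_{x\in X}D_x$ with $t_{x_i}=s_{x_i}(t|_{A_{i-1}})$ for all $x_i\in E$; $s$ is winning if $\mathrm{sce}^\phi(s)\subseteq\mathrm{sol}^\phi$; $\mathrm{out}^\phi=\bigcup_{s\text{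 winning}}\mathrm{sce}^\phi(s)$. Deep properties, for a QCSP $\psi$ and $\mathrm{out}=\mathrm{out}^\psi$: $\textsl{inconsistent}^\psi(x_i,a)$ iff $\forall t\in\mathrm{out}.\ t_{x_i}\ne a$; $\textsl{implied}^\psi(x_i,a)$ iff $\forall t\in\mathrm{out}.\ t_{x_i}=a$; $\textsl{d-fixable}^\psi(x_i,a)$ iff $\forall t\in\mathrm{out}.\ t[x_i:=a]\in\mathrm{out}$; $\textsl{d-substitutable}^\psi(x_i,a,b)$ iff $\forall t\in\mathrm{out}.\ (t_{x_i}=a)\rightarrow t[x_i:=b]\in\mathrm{out}$; $\textsl{d-interchangeable}^\psi(x_i,a,b)$ iff $\textsl{d-substitutable}^\psi(x_i,a,b)\wedge\textsl{d-substitutable}^\psi(x_i,b,a)$; $\textsl{determined}^\psi(x_i)$ iff $\forall t\in\mathrm{out}.\ \forall b\in D_{x_i}\setminus\{t_{x_i}\}.\ t[x_i:=b]\notin\mathrm{out}$; $\textsl{d-irrelevant}^\psi(x_i)$ iff $\forall t\in\mathrm{out}.\ \forall b\in D_{x_i}.\ t[x_i:=b]\in\mathrm{out}$; $\textsl{dependent}^\psi(V,x_i)$ iff $\forall t,t'\in\mathrm{out}.\ (t|_V=t'|_V)\rightarrow t_{x_i}=t'_{x_i}$. *)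

theory Defs
  imports Main
begin

text \<open>Variables x_1,...,x_n are represented by their indices 1..n.
  A V-tuple is a partial map t :: nat \<rightharpoonup> 'd with dom t = V.
  A constraint is a pair (V, R) where R is a V-relation (a set of V-tuples).\<close>

datatype quant = Forall | Exists

record 'd qcsp =
  nvars :: nat
  quant :: "nat \<Rightarrow> quant"
  doms  :: "nat \<Rightarrow> 'd set"
  cons  :: "(nat set \<times> (nat \<rightharpoonup> 'd) set) set"

definition vars :: "'d qcsp \<Rightarrow> nat set" where
  "vars \<phi> = {1..nvars \<phi>}"

definition wf_qcsp :: "('d::finite) qcsp \<Rightarrow> bool" where
  "wf_qcsp \<phi> \<longleftrightarrow> finite (cons \<phi>) \<and>
     (\<forall>(V, R) \<in> cons \<phi>. V \<subseteq> vars \<phi> \<and> (\<forall>t\<in>R. dom t = V))"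

definition ptuples :: "(nat \<Rightarrow> 'd set) \<Rightarrow> nat set \<Rightarrow> (nat \<rightharpoonup> 'd) set" where
  "ptuples D V = {t. dom t = V \<and> (\<forall>x\<in>V. the (t x) \<in> D x)}"

definition Evars :: "'d qcsp \<Rightarrow> nat set" where
  "Evars \<phi> = {i \<in> vars \<phi>. quant \<phi> i = Exists}"

definition Avars :: "'d qcsp \<Rightarrow> nat set" where
  "Avars \<phi> = {i \<in> vars \<phi>. quant \<phi> i = Forall}"

definition Aupto :: "'d qcsp \<Rightarrow> nat \<Rightarrow> nat set" where
  "Aupto \<phi> j = {i \<in> Avars \<phi>. i \<le> j}"

definition sol :: "'d qcsp \<Rightarrow> (nat \<rightharpoonup> 'd) set" where
  "sol \<phi> = {t \<in> ptuples (doms \<phi>) (vars \<phi>). \<forall>(V, R) \<in> cons \<phi>. t |` V \<in> R}"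

text \<open>A strategy: for each existential x_i a function from the product of the domains of
  the universal variables preceding x_i into D_{x_i} (values outside that product are irrelevant).\<close>
definition is_strategy :: "'d qcsp \<Rightarrow> (nat \<Rightarrow> (nat \<rightharpoonup> 'd) \<Rightarrow> 'd) \<Rightarrow> bool" where
  "is_strategy \<phi> s \<longleftrightarrow>
     (\<forall>i\<in>Evars \<phi>. \<forall>u\<in>ptuples (doms \<phi>) (Aupto \<phi> (i - 1)). s i u \<in> doms \<phi> i)"

definition sce :: "'d qcsp \<Rightarrow> (nat \<Rightarrow> (nat \<rightharpoonup> 'd) \<Rightarrow> 'd) \<Rightarrow> (nat \<rightharpoonup> 'd) set" where
  "sce \<phi> s = {t \<in> ptuples (doms \<phi>) (vars \<phi>).
      \<forall>i\<in>Evars \<phi>. t i = Some (s i (t |` Aupto \<phi> (i - 1)))}"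

definition winning :: "'d qcsp \<Rightarrow> (nat \<Rightarrow> (nat \<rightharpoonup> 'd) \<Rightarrow> 'd) \<Rightarrow> bool" where
  "winning \<phi> s \<longleftrightarrow> is_strategy \<phi> s \<and> sce \<phi> s \<subseteq> sol \<phi>"

definition out :: "'d qcsp \<Rightarrow> (nat \<rightharpoonup> 'd) set" where
  "out \<phi> = \<Union> {sce \<phi> s | s. winning \<phi> s}"

definition inconsistent :: "'d qcsp \<Rightarrow> nat \<Rightarrow> 'd \<Rightarrow> bool" where
  "inconsistent \<phi> x a \<longleftrightarrow> (\<forall>t\<in>out \<phi>. t x \<noteq> Some a)"

definition implied :: "'d qcsp \<Rightarrow> nat \<Rightarrow> 'd \<Rightarrow> bool" where
  "implied \<phi> x a \<longleftrightarrow> (\<forall>t\<in>out \<phi>. t x = Some a)"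

definition d_fixable :: "'d qcsp \<Rightarrow> nat \<Rightarrow> 'd \<Rightarrow> bool" where
  "d_fixable \<phi> x a \<longleftrightarrow> (\<forall>t\<in>out \<phi>. t(x \<mapsto> a) \<in> out \<phi>)"

definition d_substitutable :: "'d qcsp \<Rightarrow> nat \<Rightarrow> 'd \<Rightarrow> 'd \<Rightarrow> bool" where
  "d_substitutable \<phi> x a b \<longleftrightarrow> (\<forall>t\<in>out \<phi>. t x = Some a \<longrightarrow> t(x \<mapsto> b) \<in> out \<phi>)"

definition d_interchangeable :: "'d qcsp \<Rightarrow> nat \<Rightarrow> 'd \<Rightarrow> 'd \<Rightarrow> bool" where
  "d_interchangeable \<phi> x a b \<longleftrightarrow> d_substitutable \<phi> x a b \<and> d_substitutable \<phi> x b a"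

definition determined :: "'d qcsp \<Rightarrow> nat \<Rightarrow> bool" where
  "determined \<phi> x \<longleftrightarrow>
     (\<forall>t\<in>out \<phi>. \<forall>b\<in>doms \<phi> x - {the (t x)}. t(x \<mapsto> b) \<notin> out \<phi>)"

definition d_irrelevant :: "'d qcsp \<Rightarrow> nat \<Rightarrow> bool" where
  "d_irrelevant \<phi> x \<longleftrightarrow> (\<forall>t\<in>out \<phi>. \<forall>b\<in>doms \<phi> x. t(x \<mapsto> b) \<in> out \<phi>)"

definition dependent :: "'d qcsp \<Rightarrow> nat set \<Rightarrow> nat \<Rightarrow> bool" where
  "dependent \<phi> V x \<longleftrightarrow> (\<forall>t\<in>out \<phi>. \<forall>t'\<in>out \<phi>. t |` V = t' |` V \<longrightarrow> t x = t' x)"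

definition single_con :: "'d qcsp \<Rightarrow> nat set \<times> (nat \<rightharpoonup> 'd) set \<Rightarrow> 'd qcsp" where
  "single_con \<phi> c = \<phi>\<lparr>cons := {c}\<rparr>"

end

theory Submission
  imports Defs
begin

lemma single_simps[simp]:
  "vars (single_con \<phi> c) = vars \<phi>" "Evars (single_con \<phi> c) = Evars \<phi>"
  "Avars (single_con \<phi> c) = Avars \<phi>" "Aupto (single_con \<phi> c) j = Aupto \<phi> j"
  "doms (single_con \<phi> c) = doms \<phi>"
  by (simp_all add: single_con_def vars_def Evars_def Avars_def Aupto_def)

lemma sce_single[simp]: "sce (single_con \<phi> c) s = sce \<phi> s"
  by (simp add: sce_def)

lemma strat_single[simp]: "is_strategy (single_con \<phi> c) s = is_strategy \<phi> s"
  by (simp add: is_strategy_def)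

lemma sol_mono: "c \<in> cons \<phi> \<Longrightarrow> sol \<phi> \<subseteq> sol (single_con \<phi> c)"
  by (auto simp: sol_def single_con_def vars_def)

lemma out_mono: "c \<in> cons \<phi> \<Longrightarrow> out \<phi> \<subseteq> out (single_con \<phi> c)"
  using sol_mono[of c \<phi>] by (auto simp: out_def winning_def)

lemma out_sol: "out \<phi> \<subseteq> sol \<phi>"
  by (auto simp: out_def winning_def)

lemma sol_glue: "u \<in> ptuples (doms \<phi>) (vars \<phi>) \<Longrightarrow> (\<forall>c\<in>cons \<phi>. u \<in> sol (single_con \<phi> c)) \<Longrightarrow> u \<in> sol \<phi>"
  by (fastforce simp: sol_def single_con_def)

lemma ptuples_upd: "v \<in> ptuples D V \<Longrightarrow> i \<in> V \<Longrightarrow> b \<in> D i \<Longrightarrow> v(i\<mapsto>b) \<in> ptuples D V"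
  by (auto simp: ptuples_def)

lemma ptuples_restr: "v \<in> ptuples D V \<Longrightarrow> W \<subseteq> V \<Longrightarrow> v |` W \<in> ptuples D W"
  by (auto simp: ptuples_def)

lemma out_some: "t \<in> out \<phi> \<Longrightarrow> i \<in> vars \<phi> \<Longrightarrow> t i \<noteq> None"
proof -
  assume "t \<in> out \<phi>" "i \<in> vars \<phi>"
  then have "dom t = vars \<phi>" by (auto simp: out_def sce_def ptuples_def)
  then show ?thesis using \<open>i \<in> vars \<phi>\<close> by auto
qed

lemma Aupto_sub: "Aupto \<phi> j \<subseteq> vars \<phi>"
  by (auto simp: Aupto_def Avars_def)

lemma restr_upd_out: "i \<notin> W \<Longrightarrow> (v(i\<mapsto>b)) |` W = v |` W"
  by (auto simp: restrict_map_def fun_eq_iff)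

lemma core:
  assumes i: "i \<in> vars \<phi>" and b: "b \<in> doms \<phi> i"
    and H: "\<forall>c\<in>cons \<phi>. \<forall>t\<in>out (single_con \<phi> c). the (t i) \<in> S \<longrightarrow> t(i\<mapsto>b) \<in> out (single_con \<phi> c)"
    and t: "t \<in> out \<phi>" and tS: "the (t i) \<in> S"
  shows "t(i\<mapsto>b) \<in> out \<phi>"
proof -
  obtain s where ws: "winning \<phi> s" and ts: "t \<in> sce \<phi> s" using t by (auto simp: out_def)
  have strat: "is_strategy \<phi> s" and ssol: "sce \<phi> s \<subseteq> sol \<phi>" using ws by (auto simp: winning_def)
  have key: "v(i\<mapsto>b) \<in> sol \<phi>" if v: "v \<in> sce \<phi> s" and vS: "the (v i) \<in> S" for v
  proof (rule sol_glue)
    show "v(i\<mapsto>b) \<in> ptuples (doms \<phi>) (vars \<phi>)"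
      using v i b by (auto simp: sce_def intro: ptuples_upd)
    have vo: "v \<in> out \<phi>" using v ws by (auto simp: out_def)
    show "\<forall>c\<in>cons \<phi>. v(i\<mapsto>b) \<in> sol (single_con \<phi> c)"
    proof
      fix c assume c: "c \<in> cons \<phi>"
      then have "v \<in> out (single_con \<phi> c)" using vo out_mono by blast
      then have "v(i\<mapsto>b) \<in> out (single_con \<phi> c)" using H c vS by blast
      then show "v(i\<mapsto>b) \<in> sol (single_con \<phi> c)" using out_sol by blast
    qed
  qed
  have tp: "t \<in> ptuples (doms \<phi>) (vars \<phi>)" using ts by (auto simp: sce_def)
  show ?thesis
  proof (cases "quant \<phi> i")
    case Exists
    then have iE: "i \<in> Evars \<phi>" using i by (auto simp: Evars_def)
    have iA: "i \<notin> Aupto \<phi> j" for j using Exists by (auto simp: Aupto_def Avars_def)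
    define s' where "s' = (\<lambda>j u. if j = i \<and> s i u \<in> S then b else s j u)"
    have st': "is_strategy \<phi> s'" using strat b by (auto simp: is_strategy_def s'_def)
    have sub: "sce \<phi> s' \<subseteq> sol \<phi>"
    proof
      fix v' assume v': "v' \<in> sce \<phi> s'"
      define w where "w = s i (v' |` Aupto \<phi> (i - 1))"
      define v where "v = v'(i \<mapsto> w)"
      have v'p: "v' \<in> ptuples (doms \<phi>) (vars \<phi>)" using v' by (auto simp: sce_def)
      have wd: "w \<in> doms \<phi> i" unfolding w_def
        using strat iE ptuples_restr[OF v'p Aupto_sub] by (auto simp: is_strategy_def)
      have rv: "v |` Aupto \<phi> j = v' |` Aupto \<phi> j" for j
        unfolding v_def using iA by (rule restr_upd_out)
      have vs: "v \<in> sce \<phi> s"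
        unfolding sce_def
      proof (intro CollectI conjI ballI)
        show "v \<in> ptuples (doms \<phi>) (vars \<phi>)" unfolding v_def using v'p i wd by (rule ptuples_upd)
        fix j assume j: "j \<in> Evars \<phi>"
        show "v j = Some (s j (v |` Aupto \<phi> (j - 1)))"
        proof (cases "j = i")
          case True
          have "v i = Some w" by (simp add: v_def)
          then show ?thesis using True rv[of "i - 1"] unfolding w_def by metis
        next
          case False
          then have "v j = v' j" by (simp add: v_def)
          also have "\<dots> = Some (s' j (v' |` Aupto \<phi> (j - 1)))" using v' j by (auto simp: sce_def)
          finally show ?thesis using False by (simp add: s'_def rv)
        qed
      qed
      show "v' \<in> sol \<phi>"
      proof (cases "w \<in> S")
        case True
        have "v' i = Some (s' i (v' |` Aupto \<phi> (i - 1)))" using v' iE by (auto simp: sce_def)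
        then have "v' i = Some b" using True by (simp add: s'_def w_def)
        then have "v' = v(i\<mapsto>b)" by (auto simp: v_def fun_eq_iff)
        then show ?thesis using key[OF vs] True by (simp add: v_def)
      next
        case False
        have "v' i = Some (s' i (v' |` Aupto \<phi> (i - 1)))" using v' iE by (auto simp: sce_def)
        then have "v' i = Some w" using False by (simp add: s'_def w_def)
        then have "v' = v" by (auto simp: v_def fun_eq_iff)
        then show ?thesis using vs ssol by blast
      qed
    qed
    have "t(i\<mapsto>b) \<in> sce \<phi> s'"
      unfolding sce_def
    proof (intro CollectI conjI ballI)
      show "t(i\<mapsto>b) \<in> ptuples (doms \<phi>) (vars \<phi>)" using tp i b by (rule ptuples_upd)
      fix j assume j: "j \<in> Evars \<phi>"
      have tj: "t j = Some (s j (t |` Aupto \<phi> (j - 1)))" using ts j by (auto simp: sce_def)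
      have e: "(t(i\<mapsto>b)) |` Aupto \<phi> (j - 1) = t |` Aupto \<phi> (j - 1)" by (rule restr_upd_out[OF iA])
      show "(t(i\<mapsto>b)) j = Some (s' j ((t(i\<mapsto>b)) |` Aupto \<phi> (j - 1)))"
      proof (cases "j = i")
        case True
        then show ?thesis unfolding e using tj tS by (simp add: s'_def)
      next
        case False
        then show ?thesis unfolding e using tj by (simp add: s'_def)
      qed
    qed
    then show ?thesis using st' sub by (auto simp: out_def winning_def)
  next
    case Forall
    then have iAv: "i \<in> Avars \<phi>" using i by (auto simp: Avars_def)
    then have iE: "i \<notin> Evars \<phi>" by (auto simp: Avars_def Evars_def)
    obtain c where tc: "t i = Some c" and cd: "c \<in> doms \<phi> i" using tp i by (force simp: ptuples_def)
    define s' where "s' = (\<lambda>j u. if u i = Some b then s j (u(i\<mapsto>c)) else s j u)"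
    have st': "is_strategy \<phi> s'"
      unfolding is_strategy_def
    proof (intro ballI)
      fix j u assume j: "j \<in> Evars \<phi>" and u: "u \<in> ptuples (doms \<phi>) (Aupto \<phi> (j - 1))"
      show "s' j u \<in> doms \<phi> j"
      proof (cases "u i = Some b")
        case True
        then have "i \<in> Aupto \<phi> (j - 1)" using u by (auto simp: ptuples_def)
        then have "u(i\<mapsto>c) \<in> ptuples (doms \<phi>) (Aupto \<phi> (j - 1))" using u cd ptuples_upd by metis
        then show ?thesis using True strat j by (auto simp: s'_def is_strategy_def)
      next
        case False
        then show ?thesis using u strat j by (auto simp: s'_def is_strategy_def)
      qed
    qed
    have sub: "sce \<phi> s' \<subseteq> sol \<phi>"
    proof
      fix v' assume v': "v' \<in> sce \<phi> s'"
      have v'p: "v' \<in> ptuples (doms \<phi>) (vars \<phi>)" using v' by (auto simp: sce_def)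
      show "v' \<in> sol \<phi>"
      proof (cases "v' i = Some b")
        case True
        define v where "v = v'(i \<mapsto> c)"
        have vs: "v \<in> sce \<phi> s"
          unfolding sce_def
        proof (intro CollectI conjI ballI)
          show "v \<in> ptuples (doms \<phi>) (vars \<phi>)" unfolding v_def using v'p i cd by (rule ptuples_upd)
          fix j assume j: "j \<in> Evars \<phi>"
          have ji: "j \<noteq> i" using j iE by auto
          have vj: "v' j = Some (s' j (v' |` Aupto \<phi> (j - 1)))" using v' j by (auto simp: sce_def)
          show "v j = Some (s j (v |` Aupto \<phi> (j - 1)))"
          proof (cases "i \<in> Aupto \<phi> (j - 1)")
            case True
            have e: "(v' |` Aupto \<phi> (j - 1))(i\<mapsto>c) = v |` Aupto \<phi> (j - 1)"
              using True by (auto simp: v_def restrict_map_def fun_eq_iff)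
            show ?thesis using vj ji \<open>v' i = Some b\<close> True e by (simp add: s'_def v_def)
          next
            case False
            have e: "v |` Aupto \<phi> (j - 1) = v' |` Aupto \<phi> (j - 1)"
              unfolding v_def using False by (rule restr_upd_out)
            show ?thesis using vj ji False e by (simp add: s'_def v_def)
          qed
        qed
        have "v' = v(i\<mapsto>b)" using True by (auto simp: v_def fun_eq_iff)
        then show ?thesis using key[OF vs] tS tc by (simp add: v_def)
      next
        case False
        have "v' \<in> sce \<phi> s"
          unfolding sce_def
        proof (intro CollectI conjI ballI)
          show "v' \<in> ptuples (doms \<phi>) (vars \<phi>)" by (rule v'p)
          fix j assume j: "j \<in> Evars \<phi>"
          have vj: "v' j = Some (s' j (v' |` Aupto \<phi> (j - 1)))" using v' j by (auto simp: sce_def)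
          have "(v' |` Aupto \<phi> (j - 1)) i \<noteq> Some b" using False by (auto simp: restrict_map_def)
          then show "v' j = Some (s j (v' |` Aupto \<phi> (j - 1)))" using vj by (simp add: s'_def)
        qed
        then show ?thesis using ssol by blast
      qed
    qed
    have "t(i\<mapsto>b) \<in> sce \<phi> s'"
      unfolding sce_def
    proof (intro CollectI conjI ballI)
      show "t(i\<mapsto>b) \<in> ptuples (doms \<phi>) (vars \<phi>)" using tp i b by (rule ptuples_upd)
      fix j assume j: "j \<in> Evars \<phi>"
      have ji: "j \<noteq> i" using j iE by auto
      have tj: "t j = Some (s j (t |` Aupto \<phi> (j - 1)))" using ts j by (auto simp: sce_def)
      show "(t(i\<mapsto>b)) j = Some (s' j ((t(i\<mapsto>b)) |` Aupto \<phi> (j - 1)))"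
      proof (cases "i \<in> Aupto \<phi> (j - 1)")
        case True
        have e: "((t(i\<mapsto>b)) |` Aupto \<phi> (j - 1))(i\<mapsto>c) = t |` Aupto \<phi> (j - 1)"
          using True tc by (auto simp: restrict_map_def fun_eq_iff)
        have "((t(i\<mapsto>b)) |` Aupto \<phi> (j - 1)) i = Some b" using True by simp
        then show ?thesis using tj ji e by (simp add: s'_def)
      next
        case False
        have e: "(t(i\<mapsto>b)) |` Aupto \<phi> (j - 1) = t |` Aupto \<phi> (j - 1)"
          using False by (rule restr_upd_out)
        have "(t |` Aupto \<phi> (j - 1)) i = None" using False by simp
        then show ?thesis using tj ji e by (simp add: s'_def)
      qed
    qed
    then show ?thesis using st' sub by (auto simp: out_def winning_def)
  qed
qed


lemma core_sub:
  assumes i: "i \<in> vars \<phi>" and b: "b \<in> doms \<phi> i"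
    and H: "\<forall>c\<in>cons \<phi>. d_substitutable (single_con \<phi> c) i a b"
  shows "d_substitutable \<phi> i a b"
  unfolding d_substitutable_def
proof (intro ballI impI)
  fix t assume t: "t \<in> out \<phi>" and ta: "t i = Some a"
  show "t(i\<mapsto>b) \<in> out \<phi>"
  proof (rule core[OF i b _ t, of "{a}"])
    show "\<forall>c\<in>cons \<phi>. \<forall>t\<in>out (single_con \<phi> c). the (t i) \<in> {a} \<longrightarrow> t(i\<mapsto>b) \<in> out (single_con \<phi> c)"
    proof (intro ballI impI)
      fix c u assume c: "c \<in> cons \<phi>" and u: "u \<in> out (single_con \<phi> c)" and ua: "the (u i) \<in> {a}"
      have "u i \<noteq> None" using out_some[OF u] i by simp
      then have "u i = Some a" using ua by auto
      then show "u(i\<mapsto>b) \<in> out (single_con \<phi> c)" using H c u by (auto simp: d_substitutable_def)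
    qed
    show "the (t i) \<in> {a}" using ta by simp
  qed
qed

lemma core_fix:
  assumes i: "i \<in> vars \<phi>" and b: "b \<in> doms \<phi> i"
    and H: "\<forall>c\<in>cons \<phi>. d_fixable (single_con \<phi> c) i b"
  shows "d_fixable \<phi> i b"
  unfolding d_fixable_def
proof (intro ballI)
  fix t assume t: "t \<in> out \<phi>"
  show "t(i\<mapsto>b) \<in> out \<phi>"
    by (rule core[OF i b _ t, of UNIV]) (use H in \<open>auto simp: d_fixable_def\<close>)
qed

theorem proposition14:
  fixes \<phi> :: "('d::finite) qcsp" and i :: nat and V :: "nat set" and a b :: 'd
  assumes "wf_qcsp \<phi>"
    and "i \<in> vars \<phi>" and "V \<subseteq> vars \<phi>"
    and "a \<in> doms \<phi> i" and "b \<in> doms \<phi> i"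
  shows "((\<exists>c\<in>cons \<phi>. inconsistent (single_con \<phi> c) i a) \<longrightarrow> inconsistent \<phi> i a)
     \<and> ((\<exists>c\<in>cons \<phi>. implied (single_con \<phi> c) i a) \<longrightarrow> implied \<phi> i a)
     \<and> ((\<forall>c\<in>cons \<phi>. d_fixable (single_con \<phi> c) i a) \<longrightarrow> d_fixable \<phi> i a)
     \<and> ((\<forall>c\<in>cons \<phi>. d_substitutable (single_con \<phi> c) i a b) \<longrightarrow> d_substitutable \<phi> i a b)
     \<and> ((\<forall>c\<in>cons \<phi>. d_interchangeable (single_con \<phi> c) i a b) \<longrightarrow> d_interchangeable \<phi> i a b)
     \<and> ((\<exists>c\<in>cons \<phi>. determined (single_con \<phi> c) i) \<longrightarrow> determined \<phi> i)
     \<and> ((\<forall>c\<in>cons \<phi>. d_irrelevant (single_con \<phi> c) i) \<longrightarrow> d_irrelevant \<phi> i)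
     \<and> ((\<exists>c\<in>cons \<phi>. dependent (single_con \<phi> c) V i) \<longrightarrow> dependent \<phi> V i)"
proof (intro conjI impI)
  note om = out_mono[of _ \<phi>]
  show "inconsistent \<phi> i a" if "\<exists>c\<in>cons \<phi>. inconsistent (single_con \<phi> c) i a"
    using that om by (fastforce simp: inconsistent_def)
  show "implied \<phi> i a" if "\<exists>c\<in>cons \<phi>. implied (single_con \<phi> c) i a"
    using that om by (fastforce simp: implied_def)
  show "d_fixable \<phi> i a" if "\<forall>c\<in>cons \<phi>. d_fixable (single_con \<phi> c) i a"
    using core_fix[OF assms(2,4) that] .
  show "d_substitutable \<phi> i a b" if "\<forall>c\<in>cons \<phi>. d_substitutable (single_con \<phi> c) i a b"
    using core_sub[OF assms(2,5) that] .
  show "d_interchangeable \<phi> i a b" if h: "\<forall>c\<in>cons \<phi>. d_interchangeable (single_con \<phi> c) i a b"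
  proof -
    have "\<forall>c\<in>cons \<phi>. d_substitutable (single_con \<phi> c) i a b"
         "\<forall>c\<in>cons \<phi>. d_substitutable (single_con \<phi> c) i b a"
      using h by (auto simp: d_interchangeable_def)
    then show ?thesis using core_sub[OF assms(2,5)] core_sub[OF assms(2,4)]
      by (simp add: d_interchangeable_def)
  qed
  show "determined \<phi> i" if h: "\<exists>c\<in>cons \<phi>. determined (single_con \<phi> c) i"
  proof -
    obtain c where c: "c \<in> cons \<phi>" and d: "determined (single_con \<phi> c) i" using h by blast
    show ?thesis using d om[OF c] unfolding determined_def by auto
  qed
  show "d_irrelevant \<phi> i" if h: "\<forall>c\<in>cons \<phi>. d_irrelevant (single_con \<phi> c) i"
    unfolding d_irrelevant_def
  proof (intro ballI)
    fix t b' assume t: "t \<in> out \<phi>" and b': "b' \<in> doms \<phi> i"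
    have "\<forall>c\<in>cons \<phi>. d_fixable (single_con \<phi> c) i b'"
      using h b' by (auto simp: d_irrelevant_def d_fixable_def)
    then show "t(i\<mapsto>b') \<in> out \<phi>" using core_fix[OF assms(2) b'] t by (auto simp: d_fixable_def)
  qed
  show "dependent \<phi> V i" if h: "\<exists>c\<in>cons \<phi>. dependent (single_con \<phi> c) V i"
  proof -
    obtain c where c: "c \<in> cons \<phi>" and d: "dependent (single_con \<phi> c) V i" using h by blast
    show ?thesis using d om[OF c] unfolding dependent_def by blast
  qed
qed

end
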